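(* Let $(X,\delta)$ be a diversity with $|X|=n$. The following are equivalent: (i) $(X,\delta)$ is $L_1$-embeddable; (ii) $(X,\delta)$ is $\ell_1^m$-embeddable for some $m\le\binom{n}{\lfloor n/2\rfloor}$; (iii) $\delta$ is a non-negative linear combination of cut diversities $\delta_U$, $U\subseteq X$.
   Context: A diversity on a set $X$ is a function $\delta$ from finite subsets of $X$ to $\mathbb{R}$ with $\delta(A)\ge 0$, $\delta(A)=0$ whenever $|A|\le 1$ (values $0$ on larger sets are allowed), and $\delta(A\cup B)+\delta(B\cup C)\ge\delta(A\cup C)$ for all finite $A,B,C$ with $B\neq\emptyset$. For a measure space $(\Omega,\mathcal{A},\mu)$, the $L_1$ diversity is $(L_1(\Omega,\mu),\delta_1)$ with $\delta_1(F)=\int_\Omega\max\{|f(\omega)-g(\omega)|:f,g\in F\}\,d\mu(\omega)$ for finite $F$; $(X,\delta)$ is $L_1$-embeddable if there is a map $\phi$ into some $L_1$ diversity with $\delta_1(\phi(A))=\delta(A)$ for all $A$. The $\ell_1^m$ diversity is $(\mathbb{R}^m,\delta_1)$ with $\delta_1(A)=\sum_{i=1}^m\max\{|a_i-b_i|:a,b\in A\}$, and $\ell_1^m$-embeddable means there is $\phi:X\to\mathbb{R}^m$ with $\delta_1(\phi(A))=\delta(A)$ for all $A$. For $U\subseteq X$ the cut diversity is $\delta_U(A)=1$ if $A\cap U$ and $A\setminus U$ are both nonempty, and $0$ otherwise. *)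

theory Defs
  imports "HOL-Analysis.Analysis"
begin

definition diversity :: "'a set \<Rightarrow> ('a set \<Rightarrow> real) \<Rightarrow> bool" where
  "diversity X \<delta> \<longleftrightarrow>
     (\<forall>A. finite A \<and> A \<subseteq> X \<longrightarrow> \<delta> A \<ge> 0) \<and>
     (\<forall>A. finite A \<and> A \<subseteq> X \<and> card A \<le> 1 \<longrightarrow> \<delta> A = 0) \<and>
     (\<forall>A B C. finite A \<and> finite B \<and> finite C \<and> A \<subseteq> X \<and> B \<subseteq> X \<and> C \<subseteq> X
        \<and> B \<noteq> {} \<longrightarrow> \<delta> (A \<union> B) + \<delta> (B \<union> C) \<ge> \<delta> (A \<union> C))"

definition L1_div :: "'b measure \<Rightarrow> ('b \<Rightarrow> real) set \<Rightarrow> real" where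
  "L1_div M F = (if F = {} then 0 else
     integral\<^sup>L M (\<lambda>\<omega>. Max {\<bar>f \<omega> - g \<omega>\<bar> | f g. f \<in> F \<and> g \<in> F}))"

text \<open>L1-embeddability, with the underlying measure space living on the type of the TYPE argument.\<close>
definition L1_embeddable_on :: "'b itself \<Rightarrow> 'a set \<Rightarrow> ('a set \<Rightarrow> real) \<Rightarrow> bool" where
  "L1_embeddable_on _ X \<delta> \<longleftrightarrow>
     (\<exists>(M::'b measure) (\<phi>::'a \<Rightarrow> 'b \<Rightarrow> real).
        (\<forall>x\<in>X. integrable M (\<phi> x)) \<and>
        (\<forall>A. finite A \<and> A \<subseteq> X \<longrightarrow> L1_div M (\<phi> ` A) = \<delta> A))"

text \<open>The l1^m diversity value; vectors of R^m are functions nat => real on coordinates i < m.\<close>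
definition l1m_div :: "nat \<Rightarrow> (nat \<Rightarrow> real) set \<Rightarrow> real" where
  "l1m_div m A = (if A = {} then 0 else
     (\<Sum>i<m. Max {\<bar>a i - b i\<bar> | a b. a \<in> A \<and> b \<in> A}))"

definition l1m_embeddable :: "nat \<Rightarrow> 'a set \<Rightarrow> ('a set \<Rightarrow> real) \<Rightarrow> bool" where
  "l1m_embeddable m X \<delta> \<longleftrightarrow>
     (\<exists>\<phi>::'a \<Rightarrow> nat \<Rightarrow> real.
        (\<forall>A. finite A \<and> A \<subseteq> X \<longrightarrow> l1m_div m (\<phi> ` A) = \<delta> A))"

definition cut_div :: "'a set \<Rightarrow> 'a set \<Rightarrow> real" where
  "cut_div U A = (if A \<inter> U \<noteq> {} \<and> A - U \<noteq> {} then 1 else 0)"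

end

theory Submission
  imports Defs
begin


definition coef :: "'a set \<Rightarrow> ('a \<Rightarrow> real) \<Rightarrow> 'a set \<Rightarrow> real" where
  "coef X f U = (if U = {} \<or> U = X then 0 else max 0 (Min (f ` (X - U)) - Max (f ` U)))"

lemma coef_nonneg: "coef X f U \<ge> 0"
  by (simp add: coef_def)

lemma coef_zero_max:
  assumes "finite X" "w \<in> U" "U \<subseteq> X" "\<forall>x\<in>X. f x \<le> f w"
  shows "coef X f U = 0"
proof (cases "U = {} \<or> U = X")
  case True then show ?thesis by (simp add: coef_def)
next
  case False
  then obtain y where y: "y \<in> X - U" using assms by blast
  have fU: "finite U" using assms finite_subset by blast
  have "Max (f ` U) = f w" using assms fU by (intro Max_eqI) auto
  moreover have "Min (f ` (X - U)) \<le> f y" using y assms by (intro Min_le) auto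
  moreover have "f y \<le> f w" using y assms by auto
  ultimately show ?thesis using False by (simp add: coef_def)
qed

lemma max_absdiff:
  fixes F :: "('b \<Rightarrow> real) set"
  assumes "finite F" "F \<noteq> {}"
  shows "Max {\<bar>f w - g w\<bar> | f g. f \<in> F \<and> g \<in> F} = Max ((\<lambda>f. f w) ` F) - Min ((\<lambda>f. f w) ` F)"
proof -
  have "Max ((\<lambda>f. f w) ` F) \<in> (\<lambda>f. f w) ` F" using assms by (intro Max_in) auto
  then obtain f1 where f1: "f1 \<in> F" "f1 w = Max ((\<lambda>f. f w) ` F)" by force
  have "Min ((\<lambda>f. f w) ` F) \<in> (\<lambda>f. f w) ` F" using assms by (intro Min_in) auto
  then obtain f2 where f2: "f2 \<in> F" "f2 w = Min ((\<lambda>f. f w) ` F)" by force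
  have fin: "finite {\<bar>f w - g w\<bar> | f g. f \<in> F \<and> g \<in> F}"
  proof -
    have "{\<bar>f w - g w\<bar> | f g. f \<in> F \<and> g \<in> F} = (\<lambda>(f,g). \<bar>f w - g w\<bar>) ` (F \<times> F)" by auto
    then show ?thesis using assms by simp
  qed
  show ?thesis
  proof (rule Max_eqI[OF fin])
    fix y assume "y \<in> {\<bar>f w - g w\<bar> | f g. f \<in> F \<and> g \<in> F}"
    then obtain f g where fg: "f \<in> F" "g \<in> F" "y = \<bar>f w - g w\<bar>" by auto
    have "f w \<le> Max ((\<lambda>f. f w) ` F)" "g w \<le> Max ((\<lambda>f. f w) ` F)"
      "f w \<ge> Min ((\<lambda>f. f w) ` F)" "g w \<ge> Min ((\<lambda>f. f w) ` F)"
      using fg assms by auto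
    then show "y \<le> Max ((\<lambda>f. f w) ` F) - Min ((\<lambda>f. f w) ` F)" using fg by auto
  next
    have "Max ((\<lambda>f. f w) ` F) \<ge> Min ((\<lambda>f. f w) ` F)" using assms f1 by (metis Min_le finite_imageI image_eqI)
    then show "Max ((\<lambda>f. f w) ` F) - Min ((\<lambda>f. f w) ` F) \<in> {\<bar>f w - g w\<bar> | f g. f \<in> F \<and> g \<in> F}"
      using f1 f2 by force
  qed
qed

lemma cut_div_simp: "cut_div U A = (if A \<inter> U \<noteq> {} \<and> A - U \<noteq> {} then 1 else 0)"
  by (simp add: cut_div_def)

lemma spread_formula:
  fixes f :: "'a \<Rightarrow> real"
  assumes "finite X" "A \<subseteq> X" "A \<noteq> {}"
  shows "(\<Sum>U\<in>Pow X. coef X f U * cut_div U A) = Max (f ` A) - Min (f ` A)"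
  using assms
proof (induction "card X" arbitrary: X A rule: less_induct)
  case less
  have fA: "finite A" using less.prems finite_subset by blast
  have Xne: "X \<noteq> {}" using less.prems by blast
  have "Max (f ` X) \<in> f ` X" using less.prems Xne by (intro Max_in) auto
  then obtain z where z: "z \<in> X" "f z = Max (f ` X)" by force
  have zmax: "\<forall>x\<in>X. f x \<le> f z" using z less.prems by auto
  define X' where "X' = X - {z}"
  have fX': "finite X'" using less.prems X'_def by auto
  have cX': "card X' < card X" unfolding X'_def using z less.prems by (intro card_Diff1_less)
  have step1: "(\<Sum>U\<in>Pow X. coef X f U * cut_div U A) = (\<Sum>U\<in>Pow X'. coef X f U * cut_div U A)"
  proof (rule sum.mono_neutral_right)
    show "finite (Pow X)" using less.prems by simp
    show "Pow X' \<subseteq> Pow X" using X'_def by auto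
    show "\<forall>U\<in>Pow X - Pow X'. coef X f U * cut_div U A = 0"
    proof
      fix U assume "U \<in> Pow X - Pow X'"
      then have "z \<in> U" "U \<subseteq> X" using X'_def by auto
      then show "coef X f U * cut_div U A = 0" using coef_zero_max[OF less.prems(1) _ _ zmax] by simp
    qed
  qed
  show ?case
  proof (cases "X' = {}")
    case True
    then have X: "X = {z}" using X'_def z by auto
    then have A: "A = {z}" using less.prems by auto
    have "(\<Sum>U\<in>Pow X'. coef X f U * cut_div U A) = 0" using True by (simp add: coef_def)
    then show ?thesis using step1 A by simp
  next
    case False
    have "Max (f ` X') \<in> f ` X'" using fX' False by (intro Max_in) auto
    then obtain w where w: "w \<in> X'" "f w = Max (f ` X')" by force
    have wmax: "\<forall>x\<in>X'. f x \<le> f w" using w fX' by auto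
    have zX': "z \<notin> X'" using X'_def by auto
    have coefeq: "coef X f U = coef X' f U + (if U = X' then f z - f w else 0)" if "U \<in> Pow X'" for U
    proof (cases "U = {}")
      case True then show ?thesis using False by (simp add: coef_def)
    next
      case Une: False
      have fU: "finite U" using that fX' finite_subset by auto
      have UX: "U \<noteq> X" using that zX' z by auto
      show ?thesis
      proof (cases "U = X'")
        case True
        have "X - U = {z}" using True X'_def z by auto
        moreover have "f z \<ge> f w" using zmax w X'_def by auto
        ultimately show ?thesis using True UX Une w by (simp add: coef_def)
      next
        case UX': False
        have XU: "X - U = insert z (X' - U)" using X'_def that z by auto
        have ne: "X' - U \<noteq> {}" using UX' that by auto
        have "Min (f ` (X - U)) = min (f z) (Min (f ` (X' - U)))"
          unfolding XU using fX' ne by (simp add: Min_insert)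
        also have "\<dots> = Min (f ` (X' - U))"
        proof -
          obtain y where "y \<in> X' - U" using ne by blast
          then have "Min (f ` (X' - U)) \<le> f y" using fX' by (intro Min_le) auto
          moreover have "f y \<le> f z" using \<open>y \<in> X' - U\<close> zmax X'_def by auto
          ultimately show ?thesis by simp
        qed
        finally show ?thesis using UX UX' Une by (simp add: coef_def)
      qed
    qed
    have step2: "(\<Sum>U\<in>Pow X'. coef X f U * cut_div U A)
       = (\<Sum>U\<in>Pow X'. coef X' f U * cut_div U A) + (f z - f w) * cut_div X' A"
    proof -
      have "(\<Sum>U\<in>Pow X'. coef X f U * cut_div U A)
          = (\<Sum>U\<in>Pow X'. coef X' f U * cut_div U A + (if U = X' then (f z - f w) * cut_div X' A else 0))"
        by (rule sum.cong) (auto simp: coefeq algebra_simps)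
      also have "\<dots> = (\<Sum>U\<in>Pow X'. coef X' f U * cut_div U A) + (f z - f w) * cut_div X' A"
        using fX' by (simp add: sum.distrib)
      finally show ?thesis .
    qed
    show ?thesis
    proof (cases "z \<in> A")
      case False
      then have AX': "A \<subseteq> X'" using less.prems X'_def by auto
      then have "cut_div X' A = 0" by (simp add: cut_div_def)
      then show ?thesis using step1 step2 less.hyps[OF cX' fX' AX' less.prems(3)] by simp
    next
      case True
      define A' where "A' = A - {z}"
      have A'X': "A' \<subseteq> X'" using A'_def less.prems X'_def by auto
      have Aeq: "A = insert z A'" using True A'_def by auto
      show ?thesis
      proof (cases "A' = {}")
        case True
        have "(\<Sum>U\<in>Pow X'. coef X' f U * cut_div U A) = 0"
          by (rule sum.neutral) (use True Aeq zX' in \<open>auto simp: cut_div_def\<close>)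
        moreover have "cut_div X' A = 0" using True Aeq zX' by (auto simp: cut_div_def)
        ultimately show ?thesis using step1 step2 Aeq True by simp
      next
        case A'ne: False
        have fA': "finite A'" using A'X' fX' finite_subset by auto
        have swap: "coef X' f U * cut_div U A = coef X' f U * cut_div U (insert w A')" if "U \<in> Pow X'" for U
        proof (cases "w \<in> U")
          case True
          then show ?thesis using coef_zero_max[OF fX' True _ wmax] that by simp
        next
          case False
          have "cut_div U A = cut_div U (insert w A')"
            using False that zX' Aeq unfolding cut_div_def by auto
          then show ?thesis by simp
        qed
        have iwX: "insert w A' \<subseteq> X'" using w A'X' by auto
        have IH: "(\<Sum>U\<in>Pow X'. coef X' f U * cut_div U (insert w A'))
            = Max (f ` insert w A') - Min (f ` insert w A')"
          using less.hyps[OF cX' fX' iwX] by simp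
        have m1: "Max (f ` insert w A') = f w" using fA' wmax A'X' by (intro Max_eqI) auto
        have m2: "Min (f ` insert w A') = Min (f ` A')"
        proof -
          obtain y where "y \<in> A'" using A'ne by blast
          then have "Min (f ` A') \<le> f y" "f y \<le> f w" using fA' wmax A'X' by auto
          then show ?thesis using fA' A'ne by (simp add: Min_insert)
        qed
        have cutX': "cut_div X' A = 1" using A'ne Aeq A'X' zX' by (auto simp: cut_div_def)
        have m3: "Max (f ` A) = f z" using Aeq less.prems zmax fA by (intro Max_eqI) auto
        have m4: "Min (f ` A) = Min (f ` A')"
        proof -
          obtain y where "y \<in> A'" using A'ne by blast
          then have "Min (f ` A') \<le> f y" "f y \<le> f z" using fA' zmax A'X' X'_def by auto
          then show ?thesis using fA' A'ne Aeq by (simp add: Min_insert)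
        qed
        have "(\<Sum>U\<in>Pow X'. coef X' f U * cut_div U A) = (\<Sum>U\<in>Pow X'. coef X' f U * cut_div U (insert w A'))"
          by (rule sum.cong) (auto simp: swap)
        then show ?thesis using step1 step2 IH m1 m2 m3 m4 cutX' by simp
      qed
    qed
  qed
qed



lemma chain_formula:
  fixes c :: "'a set \<Rightarrow> real"
  assumes fC: "finite C" and ch: "\<forall>U\<in>C. \<forall>V\<in>C. U \<subseteq> V \<or> V \<subseteq> U"
    and cnn: "\<forall>U\<in>C. c U \<ge> 0" and fA: "finite A" and Ane: "A \<noteq> {}"
  shows "Max ((\<lambda>x. \<Sum>U\<in>{U\<in>C. x \<notin> U}. c U) ` A) - Min ((\<lambda>x. \<Sum>U\<in>{U\<in>C. x \<notin> U}. c U) ` A)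
       = (\<Sum>U\<in>C. c U * cut_div U A)"
proof -
  define S where "S x = {U\<in>C. x \<notin> U}" for x
  define g where "g x = (\<Sum>U\<in>S x. c U)" for x
  have fS: "finite (S x)" for x using fC S_def by auto
  have nest: "S x \<subseteq> S y \<or> S y \<subseteq> S x" for x y
  proof (rule ccontr)
    assume "\<not> (S x \<subseteq> S y \<or> S y \<subseteq> S x)"
    then obtain U V where "U \<in> S x" "U \<notin> S y" "V \<in> S y" "V \<notin> S x" by blast
    then have "U \<in> C" "V \<in> C" "x \<notin> U" "y \<in> U" "y \<notin> V" "x \<in> V" unfolding S_def by auto
    then show False using ch by blast
  qed
  have gmono: "S x \<subseteq> S y \<Longrightarrow> g x \<le> g y" for x y
    unfolding g_def using fS cnn S_def by (intro sum_mono2) auto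
  have "Max ((\<lambda>x. card (S x)) ` A) \<in> (\<lambda>x. card (S x)) ` A" using fA Ane by (intro Max_in) auto
  then obtain a0 where a0: "a0 \<in> A" "card (S a0) = Max ((\<lambda>x. card (S x)) ` A)" by force
  have a0max: "S x \<subseteq> S a0" if "x \<in> A" for x
  proof (rule ccontr)
    assume "\<not> S x \<subseteq> S a0"
    then have "S a0 \<subset> S x" using nest by blast
    then have "card (S a0) < card (S x)" using fS psubset_card_mono by blast
    moreover have "card (S x) \<le> card (S a0)" using a0 that fA by auto
    ultimately show False by simp
  qed
  have "Min ((\<lambda>x. card (S x)) ` A) \<in> (\<lambda>x. card (S x)) ` A" using fA Ane by (intro Min_in) auto
  then obtain b0 where b0: "b0 \<in> A" "card (S b0) = Min ((\<lambda>x. card (S x)) ` A)" by force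
  have b0min: "S b0 \<subseteq> S x" if "x \<in> A" for x
  proof (rule ccontr)
    assume "\<not> S b0 \<subseteq> S x"
    then have "S x \<subset> S b0" using nest by blast
    then have "card (S x) < card (S b0)" using fS psubset_card_mono by blast
    moreover have "card (S b0) \<le> card (S x)" using b0 that fA by auto
    ultimately show False by simp
  qed
  have M1: "Max (g ` A) = g a0" using fA a0 a0max gmono by (intro Max_eqI) auto
  have M2: "Min (g ` A) = g b0" using fA b0 b0min gmono by (intro Min_eqI) auto
  have sub: "S b0 \<subseteq> S a0" using a0max b0 by auto
  have "g a0 - g b0 = (\<Sum>U\<in>S a0 - S b0. c U)"
    unfolding g_def using sum.subset_diff[OF sub fS, of c] by simp
  also have "\<dots> = (\<Sum>U\<in>C. c U * cut_div U A)"
  proof -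
    have cut: "cut_div U A = (if U \<in> S a0 - S b0 then 1 else 0)" if "U \<in> C" for U
    proof (cases "A \<inter> U \<noteq> {} \<and> A - U \<noteq> {}")
      case True
      then obtain x y where "x \<in> A" "x \<in> U" "y \<in> A" "y \<notin> U" by blast
      then have "U \<in> S y" "U \<notin> S x" using that S_def by auto
      then have "U \<in> S a0 - S b0" using a0max b0min \<open>x \<in> A\<close> \<open>y \<in> A\<close> by blast
      then show ?thesis using True by (simp add: cut_div_def)
    next
      case False
      then have "U \<notin> S a0 - S b0" using a0 b0 S_def by auto
      then show ?thesis using False by (simp add: cut_div_def)
    qed
    have "(\<Sum>U\<in>C. c U * cut_div U A) = (\<Sum>U\<in>C. if U \<in> S a0 - S b0 then c U else 0)"
      by (rule sum.cong) (auto simp: cut)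
    also have "\<dots> = (\<Sum>U\<in>C \<inter> (S a0 - S b0). c U)"
      using fC by (simp add: sum.inter_restrict)
    also have "C \<inter> (S a0 - S b0) = S a0 - S b0" using S_def by auto
    finally show ?thesis by simp
  qed
  finally show ?thesis using M1 M2 unfolding g_def S_def by simp
qed



definition chainof :: "'a set \<times> 'a list \<Rightarrow> 'a set set" where
  "chainof p = {fst p \<union> set (take k (snd p)) | k. k \<le> length (snd p)}"

definition goodp :: "'a set \<Rightarrow> 'a set \<times> 'a list \<Rightarrow> bool" where
  "goodp X p \<longleftrightarrow> fst p \<subseteq> X \<and> set (snd p) \<subseteq> X \<and> distinct (snd p) \<and> fst p \<inter> set (snd p) = {}
     \<and> 2 * card (fst p) + length (snd p) = card X"

definition SCD :: "'a set \<Rightarrow> ('a set \<times> 'a list) set \<Rightarrow> bool" where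
  "SCD X D \<longleftrightarrow> finite D \<and> (\<forall>p\<in>D. goodp X p) \<and> (\<forall>U. U \<subseteq> X \<longrightarrow> (\<exists>!p. p \<in> D \<and> U \<in> chainof p))"

definition topc :: "'a set \<times> 'a list \<Rightarrow> 'a set" where
  "topc p = fst p \<union> set (snd p)"

lemma chainof_sub: "goodp X p \<Longrightarrow> U \<in> chainof p \<Longrightarrow> U \<subseteq> X"
proof -
  assume g: "goodp X p" and U: "U \<in> chainof p"
  then obtain k where "U = fst p \<union> set (take k (snd p))" unfolding chainof_def by blast
  moreover have "set (take k (snd p)) \<subseteq> set (snd p)" by (rule set_take_subset)
  ultimately show "U \<subseteq> X" using g unfolding goodp_def by blast
qed

lemma topc_in: "topc p \<in> chainof p"
  unfolding chainof_def topc_def by (rule CollectI, rule exI[of _ "length (snd p)"]) simp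

lemma chainof_finite: "finite (chainof p)"
proof -
  have "chainof p = (\<lambda>k. fst p \<union> set (take k (snd p))) ` {..length (snd p)}"
    unfolding chainof_def by auto
  then show ?thesis by simp
qed

lemma chainof_chain: "U \<in> chainof p \<Longrightarrow> V \<in> chainof p \<Longrightarrow> U \<subseteq> V \<or> V \<subseteq> U"
proof -
  assume "U \<in> chainof p" "V \<in> chainof p"
  then obtain k j where kj: "U = fst p \<union> set (take k (snd p))" "V = fst p \<union> set (take j (snd p))"
    unfolding chainof_def by blast
  show "U \<subseteq> V \<or> V \<subseteq> U"
  proof (cases "k \<le> j")
    case True
    then have "set (take k (snd p)) \<subseteq> set (take j (snd p))" by (rule set_take_subset_set_take)
    then show ?thesis using kj by blast
  next
    case False
    then have "set (take j (snd p)) \<subseteq> set (take k (snd p))" by (intro set_take_subset_set_take) simp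
    then show ?thesis using kj by blast
  qed
qed

lemma card_take_union:
  assumes "finite B" "distinct xs" "B \<inter> set xs = {}" "k \<le> length xs"
  shows "card (B \<union> set (take k xs)) = card B + k"
proof -
  have "set (take k xs) \<subseteq> set xs" by (rule set_take_subset)
  then have "B \<inter> set (take k xs) = {}" using assms(3) by blast
  then have "card (B \<union> set (take k xs)) = card B + card (set (take k xs))"
    using assms by (simp add: card_Un_disjoint)
  also have "card (set (take k xs)) = k" using assms by (simp add: distinct_card)
  finally show ?thesis .
qed

lemma ex1_eq: "\<exists>!x. P x \<Longrightarrow> P a \<Longrightarrow> P b \<Longrightarrow> a = b"
proof -
  assume "\<exists>!x. P x" "P a" "P b"
  then obtain x where "\<forall>y. P y \<longrightarrow> y = x" by (elim ex1E) simp
  then show "a = b" using \<open>P a\<close> \<open>P b\<close> by metis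
qed

lemma SCD_card:
  assumes "finite X" "SCD X D"
  shows "card D \<le> card X choose (card X div 2)"
proof -
  define n where "n = card X"
  define mid where "mid p = fst p \<union> set (take (n div 2 - card (fst p)) (snd p))" for p :: "'a set \<times> 'a list"
  have good: "goodp X p" if "p \<in> D" for p using assms(2) that unfolding SCD_def by simp
  have midin: "mid p \<in> chainof p" if "p \<in> D" for p
  proof -
    have "n div 2 - card (fst p) \<le> length (snd p)" using good[OF that] unfolding goodp_def n_def by linarith
    then show ?thesis unfolding chainof_def mid_def by blast
  qed
  have midcard: "card (mid p) = n div 2" if "p \<in> D" for p
  proof -
    have g: "goodp X p" using good that .
    have fB: "finite (fst p)" using g assms(1) finite_subset unfolding goodp_def by blast
    have le: "n div 2 - card (fst p) \<le> length (snd p)" using g unfolding goodp_def n_def by linarith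
    have "card (mid p) = card (fst p) + (n div 2 - card (fst p))"
      unfolding mid_def using g fB le by (intro card_take_union) (auto simp: goodp_def)
    also have "\<dots> = n div 2" using g unfolding goodp_def n_def by linarith
    finally show ?thesis .
  qed
  have inj: "inj_on mid D"
  proof (rule inj_onI)
    fix p q assume pq: "p \<in> D" "q \<in> D" "mid p = mid q"
    have "mid p \<subseteq> X" using chainof_sub[OF good[OF pq(1)] midin[OF pq(1)]] .
    then have u: "\<exists>!r. r \<in> D \<and> mid p \<in> chainof r" using assms(2) unfolding SCD_def by simp
    have "mid p \<in> chainof q" using pq(3) midin[OF pq(2)] by simp
    then show "p = q" using ex1_eq[OF u] pq(1,2) midin[OF pq(1)] by blast
  qed
  have sub: "mid ` D \<subseteq> {U. U \<subseteq> X \<and> card U = n div 2}"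
    proof
    fix U assume "U \<in> mid ` D"
    then obtain p where "p \<in> D" "U = mid p" by blast
    then show "U \<in> {U. U \<subseteq> X \<and> card U = n div 2}"
      using midin midcard chainof_sub[OF good] by simp
  qed
  have "card D = card (mid ` D)" using inj by (simp add: card_image)
  also have "\<dots> \<le> card {U. U \<subseteq> X \<and> card U = n div 2}"
    using sub assms(1) by (intro card_mono) auto
  also have "\<dots> = n choose (n div 2)" using assms(1) n_def by (simp add: n_subsets)
  finally show ?thesis using n_def by simp
qed



lemma SCD_exists:
  assumes "finite X"
  shows "\<exists>D. SCD X D"
  using assms
proof (induction rule: finite_induct)
  case empty
  have ch: "chainof ({}, []) = {{}}" unfolding chainof_def by auto
  show ?case
  proof (rule exI[of _ "{({}, [])}"])
    show "SCD {} {({}, [])}" unfolding SCD_def goodp_def using ch by auto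
  qed
next
  case (insert a X)
  then obtain D where D: "SCD X D" by blast
  have fD: "finite D" and gD: "\<And>p. p \<in> D \<Longrightarrow> goodp X p"
    and uD: "\<And>U. U \<subseteq> X \<Longrightarrow> \<exists>!p. p \<in> D \<and> U \<in> chainof p" using D unfolding SCD_def by auto
  have uD': "p = q" if "p \<in> D" "q \<in> D" "V \<in> chainof p" "V \<in> chainof q" "V \<subseteq> X" for p q V
  proof -
    have "\<exists>!p. p \<in> D \<and> V \<in> chainof p" using uD that(5) by blast
    then show ?thesis using that(1-4) by (metis (no_types, lifting) ex1E)
  qed
  define e1 where "e1 p = (fst p, snd p @ [a])" for p :: "'a set \<times> 'a list"
  define e2 where "e2 p = (insert a (fst p), butlast (snd p))" for p :: "'a set \<times> 'a list"
  define D' where "D' = e1 ` D \<union> e2 ` {p\<in>D. snd p \<noteq> []}"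
  have aV: "a \<notin> V" if "p \<in> D" "V \<in> chainof p" for p V
    using chainof_sub[OF gD[OF that(1)] that(2)] insert.hyps by blast
  have atop: "a \<notin> topc p" if "p \<in> D" for p using aV[OF that topc_in] .
  have cardtop: "card (topc p) = card (fst p) + length (snd p)" if "p \<in> D" for p
  proof -
    have g: "goodp X p" using gD that .
    have "finite (fst p)" using g insert.hyps finite_subset unfolding goodp_def by blast
    then show ?thesis using card_take_union[of "fst p" "snd p" "length (snd p)"] g
      unfolding topc_def goodp_def by simp
  qed
  have M1: "U \<in> chainof (e1 p) \<longleftrightarrow> U \<in> chainof p \<or> U = insert a (topc p)" for p U
  proof
    assume "U \<in> chainof (e1 p)"
    then obtain k where k: "k \<le> length (snd p) + 1" "U = fst p \<union> set (take k (snd p @ [a]))"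
      unfolding chainof_def e1_def by auto
    show "U \<in> chainof p \<or> U = insert a (topc p)"
    proof (cases "k \<le> length (snd p)")
      case True
      then have "U = fst p \<union> set (take k (snd p))" using k by simp
      then show ?thesis using True unfolding chainof_def by blast
    next
      case False
      then have "k = length (snd p) + 1" using k by simp
      then show ?thesis using k unfolding topc_def by auto
    qed
  next
    assume "U \<in> chainof p \<or> U = insert a (topc p)"
    then show "U \<in> chainof (e1 p)"
    proof
      assume "U \<in> chainof p"
      then obtain k where k: "k \<le> length (snd p)" "U = fst p \<union> set (take k (snd p))"
        unfolding chainof_def by auto
      then have "U = fst (e1 p) \<union> set (take k (snd (e1 p)))" "k \<le> length (snd (e1 p))"
        unfolding e1_def by auto
      then show ?thesis unfolding chainof_def by blast
    next
      assume "U = insert a (topc p)"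
      then have "U = fst (e1 p) \<union> set (take (length (snd p) + 1) (snd (e1 p)))"
        unfolding e1_def topc_def by auto
      then show ?thesis unfolding chainof_def e1_def by fastforce
    qed
  qed
  have M2: "U \<in> chainof (e2 p) \<longleftrightarrow> (\<exists>V\<in>chainof p. V \<noteq> topc p \<and> U = insert a V)"
    if p: "p \<in> D" "snd p \<noteq> []" for p U
  proof
    assume "U \<in> chainof (e2 p)"
    then obtain k where k: "k \<le> length (snd p) - 1" "U = insert a (fst p) \<union> set (take k (butlast (snd p)))"
      unfolding chainof_def e2_def by auto
    have kl: "k < length (snd p)" using k p by (cases "snd p") auto
    define V where "V = fst p \<union> set (take k (snd p))"
    have "U = insert a V" using k kl unfolding V_def by (simp add: take_butlast)
    moreover have "V \<in> chainof p" using kl unfolding V_def chainof_def by auto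
    moreover have "V \<noteq> topc p"
    proof
      assume "V = topc p"
      moreover have "card V = card (fst p) + k"
      proof -
        have g: "goodp X p" using gD p(1) .
        have "finite (fst p)" using g insert.hyps finite_subset unfolding goodp_def by blast
        then show ?thesis unfolding V_def using g kl by (intro card_take_union) (auto simp: goodp_def)
      qed
      ultimately show False using cardtop[OF p(1)] kl by simp
    qed
    ultimately show "\<exists>V\<in>chainof p. V \<noteq> topc p \<and> U = insert a V" by blast
  next
    assume "\<exists>V\<in>chainof p. V \<noteq> topc p \<and> U = insert a V"
    then obtain V where V: "V \<in> chainof p" "V \<noteq> topc p" "U = insert a V" by blast
    then obtain k where k: "k \<le> length (snd p)" "V = fst p \<union> set (take k (snd p))"
      unfolding chainof_def by auto
    have "k \<noteq> length (snd p)" using k V unfolding topc_def by auto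
    then have kl: "k < length (snd p)" using k by simp
    have "U = fst (e2 p) \<union> set (take k (snd (e2 p)))" using V k kl unfolding e2_def
      by (simp add: take_butlast)
    moreover have "k \<le> length (snd (e2 p))" using kl unfolding e2_def by simp
    ultimately show "U \<in> chainof (e2 p)" unfolding chainof_def by blast
  qed
  have good': "goodp (insert a X) r" if rD: "r \<in> D'" for r
  proof -
    have cX: "card (insert a X) = card X + 1" using insert.hyps by simp
    show ?thesis
    proof (cases "r \<in> e1 ` D")
      case True
      then obtain p where p: "p \<in> D" "r = e1 p" by blast
      have g: "goodp X p" using gD p(1) .
      have "a \<notin> set (snd p)" "a \<notin> fst p" using atop[OF p(1)] unfolding topc_def by auto
      then show ?thesis using g cX unfolding p e1_def goodp_def by auto
    next
      case False
      then obtain p where p: "p \<in> D" "snd p \<noteq> []" "r = e2 p" using rD D'_def by blast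
      have g: "goodp X p" using gD p(1) .
      have an: "a \<notin> set (snd p)" "a \<notin> fst p" using atop[OF p(1)] unfolding topc_def by auto
      have fB: "finite (fst p)" using g insert.hyps finite_subset unfolding goodp_def by blast
      have "length (snd p) \<ge> 1" using p(2) by (cases "snd p") auto
      then have "2 * card (insert a (fst p)) + length (butlast (snd p)) = card (insert a X)"
        using g cX an fB unfolding goodp_def by simp
      moreover have "set (butlast (snd p)) \<subseteq> set (snd p)" by (auto dest: in_set_butlastD)
      ultimately show ?thesis using g an unfolding p e2_def goodp_def
        by (auto simp: distinct_butlast)
    qed
  qed
  have uniq: "\<exists>!r. r \<in> D' \<and> U \<in> chainof r" if U: "U \<subseteq> insert a X" for U
  proof (cases "a \<in> U")
    case False
    note aU = False
    then have UX: "U \<subseteq> X" using U by auto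
    then obtain p where p: "p \<in> D" "U \<in> chainof p" using ex1_implies_ex[OF uD[OF UX]] by blast
    show ?thesis
    proof (rule ex1I[of _ "e1 p"])
      show "e1 p \<in> D' \<and> U \<in> chainof (e1 p)" using p M1 D'_def by auto
    next
      fix r assume r: "r \<in> D' \<and> U \<in> chainof r"
      show "r = e1 p"
      proof (cases "r \<in> e1 ` D")
        case True
        then obtain q where q: "q \<in> D" "r = e1 q" by blast
        then have "U \<in> chainof q" using r M1 False by auto
        then have "q = p" using uD'[OF _ _ _ _ UX] p q by blast
        then show ?thesis using q by simp
      next
        case False
        then obtain q where q: "q \<in> D" "snd q \<noteq> []" "r = e2 q" using r D'_def by blast
        then have "a \<in> U" using r M2[OF q(1,2)] by auto
        then show ?thesis using aU by simp
      qed
    qed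
  next
    case True
    define V where "V = U - {a}"
    have VX: "V \<subseteq> X" using U V_def by auto
    have UV: "U = insert a V" using True V_def by auto
    obtain p where p: "p \<in> D" "V \<in> chainof p" using ex1_implies_ex[OF uD[OF VX]] by blast
    have aV': "a \<notin> V" using V_def by simp
    have other: "V = topc q" if "q \<in> D" "U \<in> chainof (e1 q)" for q
    proof -
      have "U \<notin> chainof q" using aV[OF that(1)] True by blast
      then have "U = insert a (topc q)" using M1 that by blast
      then show ?thesis using UV aV' atop[OF that(1)] by (metis insert_ident)
    qed
    have other2: "V \<in> chainof q \<and> V \<noteq> topc q" if qq: "q \<in> D" "snd q \<noteq> []" "U \<in> chainof (e2 q)" for q
    proof -
      obtain W where W: "W \<in> chainof q" "W \<noteq> topc q" "U = insert a W" using M2[OF qq(1,2)] qq(3) by blast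
      have "W = V" using W UV aV' aV[OF qq(1) W(1)] by (metis insert_ident)
      then show ?thesis using W by simp
    qed
    show ?thesis
    proof (cases "V = topc p")
      case Vt: True
      show ?thesis
      proof (rule ex1I[of _ "e1 p"])
        show "e1 p \<in> D' \<and> U \<in> chainof (e1 p)" using p M1 D'_def UV Vt by auto
      next
        fix r assume r: "r \<in> D' \<and> U \<in> chainof r"
        show "r = e1 p"
        proof (cases "r \<in> e1 ` D")
          case True
          then obtain q where q: "q \<in> D" "r = e1 q" by blast
          then have "V = topc q" using other r by blast
          then have "V \<in> chainof q" using topc_in by simp
          then have "q = p" using uD'[OF _ _ _ _ VX] p q by blast
          then show ?thesis using q by simp
        next
          case False
          then obtain q where q: "q \<in> D" "snd q \<noteq> []" "r = e2 q" using r D'_def by blast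
          then have "V \<in> chainof q" "V \<noteq> topc q" using other2 r by auto
          then have "q = p" using uD'[OF _ _ _ _ VX] p q by blast
          then show ?thesis using Vt \<open>V \<noteq> topc q\<close> by simp
        qed
      qed
    next
      case Vt: False
      have sp: "snd p \<noteq> []"
      proof
        assume "snd p = []"
        then have "chainof p = {fst p}" unfolding chainof_def by auto
        then show False using p Vt unfolding topc_def by (simp add: \<open>snd p = []\<close>)
      qed
      show ?thesis
      proof (rule ex1I[of _ "e2 p"])
        show "e2 p \<in> D' \<and> U \<in> chainof (e2 p)" using p sp M2[OF p(1) sp] D'_def UV Vt by auto
      next
        fix r assume r: "r \<in> D' \<and> U \<in> chainof r"
        show "r = e2 p"
        proof (cases "r \<in> e1 ` D")
          case True
          then obtain q where q: "q \<in> D" "r = e1 q" by blast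
          then have "V = topc q" using other r by blast
          then have "V \<in> chainof q" using topc_in by simp
          then have "q = p" using uD'[OF _ _ _ _ VX] p q by blast
          then show ?thesis using Vt \<open>V = topc q\<close> by simp
        next
          case False
          then obtain q where q: "q \<in> D" "snd q \<noteq> []" "r = e2 q" using r D'_def by blast
          then have "V \<in> chainof q" using other2 r by auto
          then have "q = p" using uD'[OF _ _ _ _ VX] p q by blast
          then show ?thesis using q by simp
        qed
      qed
    qed
  qed
  have "finite D'" using fD D'_def by simp
  then have "SCD (insert a X) D'"
    unfolding SCD_def using good' uniq by blast
  then show ?case by blast
qed



lemma cut_empty: "cut_div U {} = 0" by (simp add: cut_div_def)

lemma cut_to_l1m:
  fixes c :: "'a set \<Rightarrow> real"
  assumes fX: "finite X" and cnn: "\<forall>U. c U \<ge> 0"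
    and dl: "\<forall>A. finite A \<and> A \<subseteq> X \<longrightarrow> \<delta> A = (\<Sum>U\<in>Pow X. c U * cut_div U A)"
  shows "\<exists>m \<le> card X choose (card X div 2). l1m_embeddable m X \<delta>"
proof -
  obtain D where D: "SCD X D" using SCD_exists[OF fX] by blast
  have fD: "finite D" and gD: "\<And>p. p \<in> D \<Longrightarrow> goodp X p"
    and uD: "\<And>U. U \<subseteq> X \<Longrightarrow> \<exists>!p. p \<in> D \<and> U \<in> chainof p" using D unfolding SCD_def by auto
  define m where "m = card D"
  have mle: "m \<le> card X choose (card X div 2)" using SCD_card[OF fX D] m_def by simp
  obtain h where h: "bij_betw h {0..<m} D" using ex_bij_betw_nat_finite[OF fD] m_def by blast
  define \<psi> where "\<psi> x i = (\<Sum>U\<in>{U \<in> chainof (h i). x \<notin> U}. c U)" for x i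
  have part: "(\<Sum>U\<in>Pow X. g U) = (\<Sum>i<m. \<Sum>U\<in>chainof (h i). g U)" for g :: "'a set \<Rightarrow> real"
  proof -
    have PX: "Pow X = \<Union>(chainof ` D)"
    proof
      show "Pow X \<subseteq> \<Union>(chainof ` D)"
      proof
        fix U assume "U \<in> Pow X"
        then have "\<exists>p. p \<in> D \<and> U \<in> chainof p" using ex1_implies_ex[OF uD] by blast
        then show "U \<in> \<Union>(chainof ` D)" by blast
      qed
      show "\<Union>(chainof ` D) \<subseteq> Pow X" using chainof_sub gD by blast
    qed
    have disj: "\<forall>p\<in>D. \<forall>q\<in>D. p \<noteq> q \<longrightarrow> chainof p \<inter> chainof q = {}"
    proof (intro ballI impI)
      fix p q assume pq: "p \<in> D" "q \<in> D" "p \<noteq> q"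
      show "chainof p \<inter> chainof q = {}"
      proof (rule ccontr)
        assume "chainof p \<inter> chainof q \<noteq> {}"
        then obtain U where U: "U \<in> chainof p" "U \<in> chainof q" by blast
        then have "U \<subseteq> X" using chainof_sub gD pq by blast
        then have "p = q" using ex1_eq[OF uD] U pq by blast
        then show False using pq by simp
      qed
    qed
    have "(\<Sum>U\<in>Pow X. g U) = (\<Sum>p\<in>D. \<Sum>U\<in>chainof p. g U)"
      unfolding PX using fD chainof_finite disj by (intro sum.UNION_disjoint) auto
    also have "\<dots> = (\<Sum>i\<in>{0..<m}. \<Sum>U\<in>chainof (h i). g U)"
      using sum.reindex_bij_betw[OF h, of "\<lambda>p. \<Sum>U\<in>chainof p. g U"] by simp
    finally show ?thesis by (simp add: atLeast0LessThan)
  qed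
  have "l1m_embeddable m X \<delta>"
    unfolding l1m_embeddable_def
  proof (intro exI[of _ \<psi>] allI impI)
    fix A assume A: "finite A \<and> A \<subseteq> X"
    show "l1m_div m (\<psi> ` A) = \<delta> A"
    proof (cases "A = {}")
      case True
      then show ?thesis using dl by (simp add: l1m_div_def cut_empty)
    next
      case False
      have each: "Max {\<bar>a i - b i\<bar> | a b. a \<in> \<psi> ` A \<and> b \<in> \<psi> ` A}
          = (\<Sum>U\<in>chainof (h i). c U * cut_div U A)" for i
      proof -
        have "Max {\<bar>a i - b i\<bar> | a b. a \<in> \<psi> ` A \<and> b \<in> \<psi> ` A}
            = Max ((\<lambda>a. a i) ` \<psi> ` A) - Min ((\<lambda>a. a i) ` \<psi> ` A)"
          using A False by (intro max_absdiff) auto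
        also have "\<dots> = Max ((\<lambda>x. \<psi> x i) ` A) - Min ((\<lambda>x. \<psi> x i) ` A)"
          by (simp add: image_image)
        also have "\<dots> = (\<Sum>U\<in>chainof (h i). c U * cut_div U A)"
        proof -
          have ch: "\<forall>U\<in>chainof (h i). \<forall>V\<in>chainof (h i). U \<subseteq> V \<or> V \<subseteq> U"
            using chainof_chain by blast
          have cn: "\<forall>U\<in>chainof (h i). c U \<ge> 0" using cnn by blast
          show ?thesis unfolding \<psi>_def
            using chain_formula[OF chainof_finite ch cn _ False] A by blast
        qed
        finally show ?thesis .
      qed
      have "l1m_div m (\<psi> ` A) = (\<Sum>i<m. Max {\<bar>a i - b i\<bar> | a b. a \<in> \<psi> ` A \<and> b \<in> \<psi> ` A})"
        using False by (simp add: l1m_div_def)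
      also have "\<dots> = (\<Sum>i<m. \<Sum>U\<in>chainof (h i). c U * cut_div U A)" using each by simp
      also have "\<dots> = (\<Sum>U\<in>Pow X. c U * cut_div U A)" using part by simp
      also have "\<dots> = \<delta> A" using dl A by simp
      finally show ?thesis .
    qed
  qed
  then show ?thesis using mle by blast
qed

lemma l1m_to_L1:
  assumes "l1m_embeddable m X \<delta>"
  shows "L1_embeddable_on TYPE(nat) X \<delta>"
proof -
  obtain \<psi> :: "'a \<Rightarrow> nat \<Rightarrow> real" where \<psi>: "\<forall>A. finite A \<and> A \<subseteq> X \<longrightarrow> l1m_div m (\<psi> ` A) = \<delta> A"
    using assms unfolding l1m_embeddable_def by blast
  have "L1_div (count_space {..<m}) (\<psi> ` A) = l1m_div m (\<psi> ` A)" for A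
    unfolding L1_div_def l1m_div_def by (simp add: lebesgue_integral_count_space_finite)
  then show ?thesis unfolding L1_embeddable_on_def
    using \<psi> by (intro exI[of _ "count_space {..<m}"] exI[of _ \<psi>]) (auto simp: integrable_count_space)
qed



lemma integrable_Min_fam:
  fixes \<phi> :: "'a \<Rightarrow> 'b \<Rightarrow> real"
  assumes "finite S" "S \<noteq> {}" "\<forall>x\<in>S. integrable M (\<phi> x)"
  shows "integrable M (\<lambda>\<omega>. Min ((\<lambda>x. \<phi> x \<omega>) ` S))"
  using assms
proof (induction rule: finite_ne_induct)
  case (singleton x) then show ?case by simp
next
  case (insert x F)
  have "(\<lambda>\<omega>. Min ((\<lambda>x. \<phi> x \<omega>) ` insert x F)) = (\<lambda>\<omega>. min (\<phi> x \<omega>) (Min ((\<lambda>x. \<phi> x \<omega>) ` F)))"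
    using insert.hyps by (simp add: Min_insert)
  then show ?case using insert by simp
qed

lemma integrable_Max_fam:
  fixes \<phi> :: "'a \<Rightarrow> 'b \<Rightarrow> real"
  assumes "finite S" "S \<noteq> {}" "\<forall>x\<in>S. integrable M (\<phi> x)"
  shows "integrable M (\<lambda>\<omega>. Max ((\<lambda>x. \<phi> x \<omega>) ` S))"
  using assms
proof (induction rule: finite_ne_induct)
  case (singleton x) then show ?case by simp
next
  case (insert x F)
  have "(\<lambda>\<omega>. Max ((\<lambda>x. \<phi> x \<omega>) ` insert x F)) = (\<lambda>\<omega>. max (\<phi> x \<omega>) (Max ((\<lambda>x. \<phi> x \<omega>) ` F)))"
    using insert.hyps by (simp add: Max_insert)
  then show ?case using insert by simp
qed

lemma L1_to_cut:
  fixes X :: "'a set" and \<delta> :: "'a set \<Rightarrow> real"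
  assumes fX: "finite X" and L: "L1_embeddable_on TYPE('b) X \<delta>"
  shows "\<exists>c :: 'a set \<Rightarrow> real. (\<forall>U. c U \<ge> 0) \<and>
               (\<forall>A. finite A \<and> A \<subseteq> X \<longrightarrow> \<delta> A = (\<Sum>U\<in>Pow X. c U * cut_div U A))"
proof -
  obtain M :: "'b measure" and \<phi> :: "'a \<Rightarrow> 'b \<Rightarrow> real" where
    int: "\<forall>x\<in>X. integrable M (\<phi> x)" and emb: "\<forall>A. finite A \<and> A \<subseteq> X \<longrightarrow> L1_div M (\<phi> ` A) = \<delta> A"
    using L unfolding L1_embeddable_on_def by blast
  define c where "c U = (\<integral>\<omega>. coef X (\<lambda>x. \<phi> x \<omega>) U \<partial>M)" for U
  have cnn: "c U \<ge> 0" for U unfolding c_def by (intro integral_nonneg_AE) (simp add: coef_nonneg)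
  have intc: "integrable M (\<lambda>\<omega>. coef X (\<lambda>x. \<phi> x \<omega>) U)" if "U \<in> Pow X" for U
  proof (cases "U = {} \<or> U = X")
    case True then show ?thesis by (simp add: coef_def)
  next
    case False
    have fU: "finite U" using that fX finite_subset by auto
    have i1: "integrable M (\<lambda>\<omega>. Min ((\<lambda>x. \<phi> x \<omega>) ` (X - U)))"
      using False that int fX by (intro integrable_Min_fam) auto
    have i2: "integrable M (\<lambda>\<omega>. Max ((\<lambda>x. \<phi> x \<omega>) ` U))"
      using False that int fU by (intro integrable_Max_fam) auto
    have "integrable M (\<lambda>\<omega>. max 0 (Min ((\<lambda>x. \<phi> x \<omega>) ` (X - U)) - Max ((\<lambda>x. \<phi> x \<omega>) ` U)))"
      using i1 i2 by (intro integrable_max integrable_diff) auto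
    then show ?thesis using False by (simp add: coef_def)
  qed
  have "\<delta> A = (\<Sum>U\<in>Pow X. c U * cut_div U A)" if A: "finite A" "A \<subseteq> X" for A
  proof (cases "A = {}")
    case True
    have "L1_div M (\<phi> ` {}) = \<delta> {}" using emb by blast
    then show ?thesis using True by (simp add: L1_div_def cut_empty)
  next
    case False
    have pw: "Max {\<bar>f \<omega> - g \<omega>\<bar> | f g. f \<in> \<phi> ` A \<and> g \<in> \<phi> ` A}
        = (\<Sum>U\<in>Pow X. coef X (\<lambda>x. \<phi> x \<omega>) U * cut_div U A)" for \<omega>
    proof -
      have "Max {\<bar>f \<omega> - g \<omega>\<bar> | f g. f \<in> \<phi> ` A \<and> g \<in> \<phi> ` A}
          = Max ((\<lambda>f. f \<omega>) ` \<phi> ` A) - Min ((\<lambda>f. f \<omega>) ` \<phi> ` A)"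
        using A False by (intro max_absdiff) auto
      also have "\<dots> = Max ((\<lambda>x. \<phi> x \<omega>) ` A) - Min ((\<lambda>x. \<phi> x \<omega>) ` A)"
        by (simp add: image_image)
      also have "\<dots> = (\<Sum>U\<in>Pow X. coef X (\<lambda>x. \<phi> x \<omega>) U * cut_div U A)"
        using spread_formula[OF fX A(2) False] by simp
      finally show ?thesis .
    qed
    have "\<delta> A = L1_div M (\<phi> ` A)" using emb A by simp
    also have "\<dots> = (\<integral>\<omega>. (\<Sum>U\<in>Pow X. coef X (\<lambda>x. \<phi> x \<omega>) U * cut_div U A) \<partial>M)"
      using False unfolding L1_div_def by (simp add: pw)
    also have "\<dots> = (\<Sum>U\<in>Pow X. (\<integral>\<omega>. coef X (\<lambda>x. \<phi> x \<omega>) U * cut_div U A \<partial>M))"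
    proof (rule Bochner_Integration.integral_sum[where I="Pow X" and M=M and f="\<lambda>U \<omega>. coef X (\<lambda>x. \<phi> x \<omega>) U * cut_div U A"])
      fix U assume "U \<in> Pow X"
      then show "integrable M (\<lambda>\<omega>. coef X (\<lambda>x. \<phi> x \<omega>) U * cut_div U A)"
        using intc[of U] by (intro Bochner_Integration.integrable_mult_left) simp
    qed
    also have "\<dots> = (\<Sum>U\<in>Pow X. c U * cut_div U A)"
      unfolding c_def by simp
    finally show ?thesis .
  qed
  then show ?thesis using cnn by blast
qed


theorem proposition9:
  fixes X :: "'a set" and \<delta> :: "'a set \<Rightarrow> real" and n :: nat
  assumes "diversity X \<delta>" and "finite X" and "card X = n"
  shows "(L1_embeddable_on TYPE('b) X \<delta> \<longrightarrow>
            (\<exists>m \<le> n choose (n div 2). l1m_embeddable m X \<delta>))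
       \<and> ((\<exists>m \<le> n choose (n div 2). l1m_embeddable m X \<delta>) \<longleftrightarrow>
            (\<exists>c :: 'a set \<Rightarrow> real. (\<forall>U. c U \<ge> 0) \<and>
               (\<forall>A. finite A \<and> A \<subseteq> X \<longrightarrow> \<delta> A = (\<Sum>U\<in>Pow X. c U * cut_div U A))))
       \<and> ((\<exists>c :: 'a set \<Rightarrow> real. (\<forall>U. c U \<ge> 0) \<and>
               (\<forall>A. finite A \<and> A \<subseteq> X \<longrightarrow> \<delta> A = (\<Sum>U\<in>Pow X. c U * cut_div U A)))
            \<longrightarrow> L1_embeddable_on TYPE(nat) X \<delta>)"
proof -
  let ?L = "L1_embeddable_on TYPE('b) X \<delta>"
  let ?M = "\<exists>m \<le> n choose (n div 2). l1m_embeddable m X \<delta>"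
  let ?C = "\<exists>c :: 'a set \<Rightarrow> real. (\<forall>U. c U \<ge> 0) \<and>
               (\<forall>A. finite A \<and> A \<subseteq> X \<longrightarrow> \<delta> A = (\<Sum>U\<in>Pow X. c U * cut_div U A))"
  let ?N = "L1_embeddable_on TYPE(nat) X \<delta>"
  have fX: "finite X" by fact
  have c2m: ?M if C: ?C
  proof -
    obtain c :: "'a set \<Rightarrow> real" where c: "\<forall>U. c U \<ge> 0"
      "\<forall>A. finite A \<and> A \<subseteq> X \<longrightarrow> \<delta> A = (\<Sum>U\<in>Pow X. c U * cut_div U A)"
      using C by (elim exE conjE)
    have "\<exists>m \<le> card X choose (card X div 2). l1m_embeddable m X \<delta>"
      by (rule cut_to_l1m[OF fX c(1) c(2)])
    then show ?thesis unfolding assms(3) .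
  qed
  have m2c: ?C if M: ?M
  proof -
    obtain m where "l1m_embeddable m X \<delta>" using M by (elim exE conjE)
    then show ?thesis by (rule L1_to_cut[OF fX l1m_to_L1])
  qed
  have p1: ?M if ?L
    by (rule c2m) (rule L1_to_cut[OF fX that])
  have p3: ?N if C: ?C
  proof -
    obtain m where "l1m_embeddable m X \<delta>" using c2m[OF C] by (elim exE conjE)
    then show ?thesis by (rule l1m_to_L1)
  qed
  show ?thesis
  proof (intro conjI impI iffI)
    assume ?L then show ?M by (rule p1)
  next
    assume ?M then show ?C by (rule m2c)
  next
    assume ?C then show ?M by (rule c2m)
  next
    assume ?C then show ?N by (rule p3)
  qed
qed

end
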